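(* Let $g$ be a prior density on $(0,\infty)$ and $\{F_\mu\}_{\mu>0}$ a family of non-negative reward distributions with $F_\mu$ having mean $\mu$, with $\lambda=\int_0^\infty E_\mu(X\mid X>0)g(\mu)\,d\mu<\infty$. Assume (A1): $g(\mu)\sim\alpha\mu^{\beta-1}$ as $\mu\to0$ for some $\alpha,\beta>0$; (A2): there is $a_1>0$ with $P_\mu(X>0)\ge a_1\min(\mu,1)$ for all $\mu>0$; and either (B1) or (B2), where $M_\mu(\theta)=E_\mu e^{\theta X}$ and: (B1) rewards are non-negative integer-valued; for every $0<\delta\le1$ there is $\theta_\delta>0$ with $M_\mu(\theta)\le e^{(1+\delta)\theta\mu}$ and $M_\mu(-\theta)\le e^{-(1-\delta)\theta\mu}$ for all $\mu>0$, $0\le\theta\le\theta_\delta$; $P_\mu(X>0)\le a_2\mu$ for some $a_2>0$; $E_\mu X^4=O(\mu)$ as $\mu\to0$; (B2) rewards are continuous with $\sup_{\mu>0}P_\mu(X\le\gamma\mu)\to0$ as $\gamma\to0$; $E_\mu X^4=O(\mu)$ as $\mu\to0$; for every $0<\delta\le1$ there is $\tau_\delta>0$ with $M_\mu(\theta)\le e^{(1+\delta)\theta\mu}$ and $M_\mu(-\theta)\le e^{-(1-\delta)\theta\mu}$ whenever $0<\theta\mu\le\tau_\delta$; and for each $t\ge1$ there is $\xi_t>0$ with $\sup_{\mu\le\xi_t}P_\mu(\hat\sigma_t^2\le\gamma\mu^2)\to0$ as $\gamma\to0$. Let $X_1,X_2,\ldots$ be i.i.d. $F_\mu$, $S_t=\sum_{u=1}^tX_u$,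 $\bar X_t=S_t/t$, $\hat\sigma_t^2=t^{-1}\sum_{u=1}^t(X_u-\bar X_t)^2$. Let $c_n\to\infty$ with $c_n=o(n^\delta)$ for all $\delta>0$, $\zeta_n\sim Cn^{-\frac1{\beta+1}}$ with $C=\big(\frac{\lambda\beta(\beta+1)}{\alpha}\big)^{\frac1{\beta+1}}$, $d_n=n^{-\omega}$ for some $0<\omega<\frac1{\beta+1}$, and $T_c=\inf\{t:S_t>t\zeta_n+c_n\hat\sigma_t\sqrt t\}$. Let $\epsilon>0$. Then as $n\to\infty$, $$\sup_{(1+\epsilon)\zeta_n\le\mu\le d_n}\big[\mu E_\mu(T_c\wedge n)\big]=O(c_n^3+\log n),\qquad E_g\big[(T_c\wedge n)\,\mu\,\mathbf 1_{\{(1+\epsilon)\zeta_n\le\mu\le d_n\}}\big]\to0,$$ where in the second expression $\mu\sim g$ and, given $\mu$, $T_c$ is computed from rewards i.i.d. $F_\mu$.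
   Context: $a\wedge b=\min(a,b)$. $E_\mu,P_\mu$ denote expectation/probability under $F_\mu$. *)

theory Defs
  imports "HOL-Probability.Probability" "HOL-Library.Landau_Symbols"
begin

text \<open>Rewards: a path omega :: nat => real, with X_u = omega u for u >= 1
  (coordinate 0 is unused).  The i.i.d. law under F mu is the infinite product.\<close>

definition iidM :: "(real \<Rightarrow> real measure) \<Rightarrow> real \<Rightarrow> (nat \<Rightarrow> real) measure" where
  "iidM F \<mu> = (\<Pi>\<^sub>M u\<in>(UNIV::nat set). F \<mu>)"

definition Ssum :: "(nat \<Rightarrow> real) \<Rightarrow> nat \<Rightarrow> real" where
  "Ssum \<omega> t = (\<Sum>u=1..t. \<omega> u)"

definition xbar :: "(nat \<Rightarrow> real) \<Rightarrow> nat \<Rightarrow> real" where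
  "xbar \<omega> t = Ssum \<omega> t / real t"

definition sigma2 :: "(nat \<Rightarrow> real) \<Rightarrow> nat \<Rightarrow> real" where
  "sigma2 \<omega> t = (\<Sum>u=1..t. (\<omega> u - xbar \<omega> t)\<^sup>2) / real t"

definition stop_cond :: "real \<Rightarrow> real \<Rightarrow> (nat \<Rightarrow> real) \<Rightarrow> nat \<Rightarrow> bool" where
  "stop_cond \<zeta> c \<omega> t \<longleftrightarrow> Ssum \<omega> t > real t * \<zeta> + c * sqrt (sigma2 \<omega> t) * sqrt (real t)"

definition Tc_min :: "real \<Rightarrow> real \<Rightarrow> nat \<Rightarrow> (nat \<Rightarrow> real) \<Rightarrow> nat" where
  "Tc_min \<zeta> c n \<omega> = (LEAST t. t = n \<or> (1 \<le> t \<and> stop_cond \<zeta> c \<omega> t))"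

definition ET :: "(real \<Rightarrow> real measure) \<Rightarrow> real \<Rightarrow> real \<Rightarrow> nat \<Rightarrow> real \<Rightarrow> real" where
  "ET F \<zeta> c n \<mu> = (\<integral>\<omega>. real (Tc_min \<zeta> c n \<omega>) \<partial>iidM F \<mu>)"

definition mgf :: "(real \<Rightarrow> real measure) \<Rightarrow> real \<Rightarrow> real \<Rightarrow> ennreal" where
  "mgf F \<mu> \<theta> = (\<integral>\<^sup>+x. ennreal (exp (\<theta> * x)) \<partial>F \<mu>)"

definition cond_mean :: "(real \<Rightarrow> real measure) \<Rightarrow> real \<Rightarrow> real" where
  "cond_mean F \<mu> = (\<integral>x. x * indicator {0<..} x \<partial>F \<mu>) / measure (F \<mu>) {0<..}"

definition fourth_moment :: "(real \<Rightarrow> real measure) \<Rightarrow> real \<Rightarrow> real" where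
  "fourth_moment F \<mu> = (\<integral>x. x ^ 4 \<partial>F \<mu>)"

end

theory Submission
  imports Defs
begin


lemma iid_prod:
  fixes M :: "real measure"
  assumes P: "prob_space M" and J: "finite J"
    and f: "\<And>i. i \<in> J \<Longrightarrow> f i \<in> borel_measurable M"
  shows "(\<integral>\<^sup>+\<omega>. (\<Prod>i\<in>J. f i (\<omega> i)) \<partial>(\<Pi>\<^sub>M u\<in>(UNIV::nat set). M)) = (\<Prod>i\<in>J. \<integral>\<^sup>+x. f i x \<partial>M)"
proof -
  interpret pps: product_prob_space "\<lambda>_::nat. M" UNIV
    by (simp add: P product_prob_space_axioms.intro product_prob_space_def product_sigma_finite_def prob_space_imp_sigma_finite)
  have m: "(\<lambda>y. \<Prod>i\<in>J. f i (y i)) \<in> borel_measurable (\<Pi>\<^sub>M u\<in>J. M)"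
    using f by (intro borel_measurable_prod_ennreal) (auto intro!: measurable_compose[OF measurable_component_singleton])
  have "(\<integral>\<^sup>+\<omega>. (\<Prod>i\<in>J. f i (\<omega> i)) \<partial>(\<Pi>\<^sub>M u\<in>(UNIV::nat set). M))
      = (\<integral>\<^sup>+\<omega>. (\<Prod>i\<in>J. f i (restrict \<omega> J i)) \<partial>(\<Pi>\<^sub>M u\<in>(UNIV::nat set). M))"
    by (intro nn_integral_cong prod.cong) auto
  also have "\<dots> = (\<integral>\<^sup>+y. (\<Prod>i\<in>J. f i (y i)) \<partial>distr (\<Pi>\<^sub>M u\<in>(UNIV::nat set). M) (\<Pi>\<^sub>M u\<in>J. M) (\<lambda>x. restrict x J))"
    by (subst nn_integral_distr) (use m in auto)
  also have "\<dots> = (\<integral>\<^sup>+y. (\<Prod>i\<in>J. f i (y i)) \<partial>(\<Pi>\<^sub>M u\<in>J. M))"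
    using J by (subst pps.distr_PiM_restrict_finite) auto
  also have "\<dots> = (\<Prod>i\<in>J. \<integral>\<^sup>+x. f i x \<partial>M)"
    using J f by (subst pps.product_nn_integral_prod) auto
  finally show ?thesis .
qed


lemma Tc_le_n: "Tc_min \<zeta> c n \<omega> \<le> n"
  unfolding Tc_min_def by (rule Least_le) simp

lemma Tc_bound:
  assumes t0: "1 \<le> t0"
  shows "real (Tc_min \<zeta> c n \<omega>) \<le> real t0 + (\<Sum>t\<in>{t0..<n}. indicator {\<omega>. \<not> stop_cond \<zeta> c \<omega> t} \<omega>)"
proof -
  define m where "m = Tc_min \<zeta> c n \<omega>"
  have mn: "m \<le> n" using Tc_le_n m_def by simp
  have ns: "\<not> stop_cond \<zeta> c \<omega> t" if "t0 \<le> t" "t < m" for t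
  proof -
    have "\<not> (t = n \<or> (1 \<le> t \<and> stop_cond \<zeta> c \<omega> t))"
      using not_less_Least[of t "\<lambda>t. t = n \<or> (1 \<le> t \<and> stop_cond \<zeta> c \<omega> t)"] that
      unfolding m_def Tc_min_def by blast
    with that t0 show ?thesis by auto
  qed
  have eq: "(\<Sum>t\<in>{t0..<n}. indicator {\<omega>. \<not> stop_cond \<zeta> c \<omega> t} \<omega> :: real)
      = real (card {t\<in>{t0..<n}. \<not> stop_cond \<zeta> c \<omega> t})"
    by (simp add: indicator_def sum.If_cases Int_def conj_commute)
  have "{t0..<m} \<subseteq> {t\<in>{t0..<n}. \<not> stop_cond \<zeta> c \<omega> t}" using ns mn by auto
  hence "card {t0..<m} \<le> card {t\<in>{t0..<n}. \<not> stop_cond \<zeta> c \<omega> t}"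
    by (intro card_mono) auto
  hence "real m \<le> real t0 + real (card {t\<in>{t0..<n}. \<not> stop_cond \<zeta> c \<omega> t})" by simp
  then show ?thesis using eq m_def by simp
qed

lemma sum_sq_dev_le:
  fixes a :: "nat \<Rightarrow> real"
  shows "(\<Sum>u=1..t. (a u - (\<Sum>v=1..t. a v) / real t)\<^sup>2) \<le> (\<Sum>u=1..t. (a u)\<^sup>2)"
proof (cases "t = 0")
  case True thus ?thesis by simp
next
  case False
  define m where "m = (\<Sum>v=1..t. a v) / real t"
  have sm: "(\<Sum>v=1..t. a v) = real t * m" using False m_def by simp
  have "(\<Sum>u=1..t. (a u - m)\<^sup>2) = (\<Sum>u=1..t. (a u)\<^sup>2 - 2 * m * a u + m\<^sup>2)"
    by (intro sum.cong) (auto simp: power2_eq_square algebra_simps)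
  also have "\<dots> = (\<Sum>u=1..t. (a u)\<^sup>2) - 2 * m * (\<Sum>u=1..t. a u) + real t * m\<^sup>2"
    by (simp add: sum.distrib sum_subtractf sum_distrib_left)
  also have "\<dots> = (\<Sum>u=1..t. (a u)\<^sup>2) - real t * m\<^sup>2" using sm by (simp add: power2_eq_square)
  also have "\<dots> \<le> (\<Sum>u=1..t. (a u)\<^sup>2)" by simp
  finally show ?thesis using m_def by simp
qed

lemma nonstop_split:
  assumes t: "1 \<le> t" and c: "0 < c" and h: "0 < h" and mu: "0 < \<mu>"
    and z: "\<zeta> \<le> (1 - 2*h) * \<mu>"
    and ns: "\<not> stop_cond \<zeta> c \<omega> t"
  shows "Ssum \<omega> t \<le> (1 - h) * real t * \<mu> \<or> (h * real t * \<mu> / c)\<^sup>2 \<le> (\<Sum>u=1..t. (\<omega> u)\<^sup>2)"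
proof (rule ccontr)
  assume "\<not> ?thesis"
  hence s: "Ssum \<omega> t > (1 - h) * real t * \<mu>" and q: "(\<Sum>u=1..t. (\<omega> u)\<^sup>2) < (h * real t * \<mu> / c)\<^sup>2" by auto
  have "sqrt (sigma2 \<omega> t) * sqrt (real t) = sqrt (\<Sum>u=1..t. (\<omega> u - xbar \<omega> t)\<^sup>2)"
    using t by (simp add: sigma2_def real_sqrt_mult[symmetric])
  also have "\<dots> \<le> sqrt (\<Sum>u=1..t. (\<omega> u)\<^sup>2)"
    unfolding xbar_def Ssum_def by (intro real_sqrt_le_mono sum_sq_dev_le)
  also have "\<dots> < h * real t * \<mu> / c"
    using q h mu c t by (intro real_less_lsqrt) auto
  finally have "c * (sqrt (sigma2 \<omega> t) * sqrt (real t)) < h * real t * \<mu>"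
    using c by (simp add: field_simps)
  moreover have "real t * \<zeta> \<le> real t * ((1 - 2*h) * \<mu>)" using z by (simp add: mult_left_mono)
  ultimately have "real t * \<zeta> + c * sqrt (sigma2 \<omega> t) * sqrt (real t) < (1 - h) * real t * \<mu>"
    by (simp add: algebra_simps)
  with s ns show False unfolding stop_cond_def by simp
qed


lemma coord_meas:
  assumes "sets M = sets (borel::real measure)"
  shows "(\<lambda>\<omega>. \<omega> u) \<in> borel_measurable (\<Pi>\<^sub>M u\<in>(UNIV::nat set). M)"
proof -
  have "(\<lambda>\<omega>. \<omega> u) \<in> measurable (\<Pi>\<^sub>M u\<in>(UNIV::nat set). M) M"
    by (rule measurable_component_singleton) simp
  thus ?thesis using measurable_cong_sets[OF refl assms] by blast
qed

lemma space_iid: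
  assumes "sets M = sets (borel::real measure)"
  shows "space (\<Pi>\<^sub>M u\<in>(UNIV::nat set). M) = UNIV"
proof -
  have "space M = UNIV" using sets_eq_imp_space_eq[OF assms] by simp
  thus ?thesis by (auto simp: space_PiM PiE_def extensional_def)
qed

lemma chernoff:
  fixes M :: "real measure"
  assumes P: "prob_space M" and S: "sets M = sets borel" and th: "0 \<le> \<theta>" and r: "0 \<le> r"
    and mg: "(\<integral>\<^sup>+x. ennreal (exp ((- \<theta>) * x)) \<partial>M) \<le> ennreal r"
  shows "emeasure (\<Pi>\<^sub>M u\<in>(UNIV::nat set). M) {\<omega>. Ssum \<omega> t \<le> b} \<le> ennreal (exp (\<theta> * b) * r ^ t)"
proof -
  let ?P = "\<Pi>\<^sub>M u\<in>(UNIV::nat set). M"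
  note cm[measurable] = coord_meas[OF S]
  have Sm: "(\<lambda>x. exp ((- \<theta>) * x)) \<in> borel_measurable M"
    using S by (simp add: measurable_cong_sets[OF S refl])
  have "emeasure ?P {\<omega>. Ssum \<omega> t \<le> b} = (\<integral>\<^sup>+\<omega>. indicator {\<omega>. Ssum \<omega> t \<le> b} \<omega> \<partial>?P)"
  proof (rule nn_integral_indicator[symmetric])
    show "{\<omega>. Ssum \<omega> t \<le> b} \<in> sets ?P"
    proof -
      have "{\<omega>. Ssum \<omega> t \<le> b} = {\<omega>\<in>space ?P. Ssum \<omega> t \<le> b}" by (simp add: space_iid[OF S])
      also have "\<dots> \<in> sets ?P" unfolding Ssum_def by measurable
      finally show ?thesis .
    qed
  qed
  also have "\<dots> \<le> (\<integral>\<^sup>+\<omega>. ennreal (exp (\<theta> * b)) * (\<Prod>u\<in>{1..t}. ennreal (exp ((- \<theta>) * \<omega> u))) \<partial>?P)"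
  proof (intro nn_integral_mono)
    fix \<omega>
    have "(\<Prod>u\<in>{1..t}. ennreal (exp ((- \<theta>) * \<omega> u))) = ennreal (exp (- \<theta> * Ssum \<omega> t))"
      by (simp add: prod_ennreal exp_sum[symmetric] Ssum_def sum_distrib_left)
    hence e: "ennreal (exp (\<theta> * b)) * (\<Prod>u\<in>{1..t}. ennreal (exp ((- \<theta>) * \<omega> u))) = ennreal (exp (\<theta> * (b - Ssum \<omega> t)))"
      by (simp add: ennreal_mult'[symmetric] exp_add[symmetric] algebra_simps)
    show "indicator {\<omega>. Ssum \<omega> t \<le> b} \<omega> \<le> ennreal (exp (\<theta> * b)) * (\<Prod>u\<in>{1..t}. ennreal (exp ((- \<theta>) * \<omega> u)))"
      unfolding e using th by (auto simp: indicator_def)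
  qed
  also have "\<dots> = ennreal (exp (\<theta> * b)) * (\<integral>\<^sup>+\<omega>. (\<Prod>u\<in>{1..t}. ennreal (exp ((- \<theta>) * \<omega> u))) \<partial>?P)"
    by (rule nn_integral_cmult) measurable
  also have "(\<integral>\<^sup>+\<omega>. (\<Prod>u\<in>{1..t}. ennreal (exp ((- \<theta>) * \<omega> u))) \<partial>?P) = (\<Prod>u\<in>{1..t}. \<integral>\<^sup>+x. ennreal (exp ((- \<theta>) * x)) \<partial>M)"
    using iid_prod[OF P, of "{1..t}" "\<lambda>_ x. ennreal (exp ((- \<theta>) * x))"] Sm by simp
  also have "\<dots> \<le> (\<Prod>u\<in>{1..t}. ennreal r)"
    using power_mono[OF mg, of t] by simp
  also have "\<dots> = ennreal (r ^ t)" using r by (simp add: prod_ennreal ennreal_power)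
  finally show ?thesis using r by (simp add: ennreal_mult'[symmetric] mult_left_mono)
qed


lemma sq_tail:
  fixes M :: "real measure"
  assumes P: "prob_space M" and S: "sets M = sets borel" and s: "0 < s"
    and a4: "0 \<le> a4" and a2: "0 \<le> a2"
    and E4: "(\<integral>\<^sup>+x. ennreal (x ^ 4) \<partial>M) \<le> ennreal a4"
    and E2: "(\<integral>\<^sup>+x. ennreal (x\<^sup>2) \<partial>M) \<le> ennreal a2"
  shows "emeasure (\<Pi>\<^sub>M u\<in>(UNIV::nat set). M) {\<omega>. s \<le> (\<Sum>u=1..t. (\<omega> u)\<^sup>2)}
           \<le> ennreal ((real t * a4 + (real t)\<^sup>2 * a2\<^sup>2) / s\<^sup>2)"
proof -
  let ?P = "\<Pi>\<^sub>M u\<in>(UNIV::nat set). M"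
  note cm[measurable] = coord_meas[OF S]
  have Sm2: "(\<lambda>x. ennreal (x\<^sup>2)) \<in> borel_measurable M"
    by (simp add: measurable_cong_sets[OF S refl])
  let ?f = "\<lambda>u v. \<integral>\<^sup>+\<omega>. ennreal ((\<omega> u)\<^sup>2) * ennreal ((\<omega> v)\<^sup>2) \<partial>?P"
  have fuu: "?f u u \<le> ennreal a4" for u
  proof -
    have "?f u u = (\<integral>\<^sup>+\<omega>. (\<Prod>i\<in>{u}. ennreal ((\<omega> i) ^ 4)) \<partial>?P)"
      by (intro nn_integral_cong) (simp add: ennreal_mult'[symmetric] power2_eq_square power4_eq_xxxx mult.assoc)
    also have "\<dots> = (\<integral>\<^sup>+x. ennreal (x ^ 4) \<partial>M)"
      using iid_prod[OF P, of "{u}" "\<lambda>_ x. ennreal (x ^ 4)"] S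
      by (simp add: measurable_cong_sets[OF S refl])
    finally show ?thesis using E4 by simp
  qed
  have fuv: "?f u v \<le> ennreal (a2\<^sup>2)" if "u \<noteq> v" for u v
  proof -
    have "?f u v = (\<integral>\<^sup>+\<omega>. (\<Prod>i\<in>{u,v}. ennreal ((\<omega> i)\<^sup>2)) \<partial>?P)"
      using that by (intro nn_integral_cong) simp
    also have "\<dots> = (\<Prod>i\<in>{u,v}. \<integral>\<^sup>+x. ennreal (x\<^sup>2) \<partial>M)"
      using iid_prod[OF P, of "{u,v}" "\<lambda>_ x. ennreal (x\<^sup>2)"] Sm2 by simp
    also have "\<dots> = (\<integral>\<^sup>+x. ennreal (x\<^sup>2) \<partial>M) ^ 2"
      using that by (simp add: power2_eq_square)
    also have "\<dots> \<le> ennreal a2 ^ 2" by (intro power_mono E2) simp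
    finally show ?thesis using a2 by (simp add: ennreal_power)
  qed
  have rowb: "(\<Sum>v\<in>{1..t}. ?f u v) \<le> ennreal (a4 + real t * a2\<^sup>2)" if "u \<in> {1..t}" for u
  proof -
    have "(\<Sum>v\<in>{1..t}. ?f u v) = ?f u u + (\<Sum>v\<in>{1..t}-{u}. ?f u v)"
      using that by (simp add: sum.remove)
    also have "\<dots> \<le> ennreal a4 + (\<Sum>v\<in>{1..t}-{u}. ennreal (a2\<^sup>2))"
      by (intro add_mono fuu sum_mono fuv) auto
    also have "(\<Sum>v\<in>{1..t}-{u}. ennreal (a2\<^sup>2)) \<le> (\<Sum>v\<in>{1..t}. ennreal (a2\<^sup>2))"
      by (intro sum_mono2) auto
    also have "\<dots> = ennreal (real t * a2\<^sup>2)" using a2 by (simp add: ennreal_mult' ennreal_of_nat_eq_real_of_nat)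
    also have "ennreal a4 + ennreal (real t * a2\<^sup>2) = ennreal (a4 + real t * a2\<^sup>2)"
      using a4 a2 by (intro ennreal_plus[symmetric]) auto
    finally show ?thesis by simp
  qed
  have "{\<omega>. s \<le> (\<Sum>u=1..t. (\<omega> u)\<^sup>2)} = {\<omega>\<in>space ?P. s \<le> (\<Sum>u=1..t. (\<omega> u)\<^sup>2)}" by (simp add: space_iid[OF S])
  also have "\<dots> \<in> sets ?P" by measurable
  finally have Am: "{\<omega>. s \<le> (\<Sum>u=1..t. (\<omega> u)\<^sup>2)} \<in> sets ?P" .
  have "emeasure ?P {\<omega>. s \<le> (\<Sum>u=1..t. (\<omega> u)\<^sup>2)} = (\<integral>\<^sup>+\<omega>. indicator {\<omega>. s \<le> (\<Sum>u=1..t. (\<omega> u)\<^sup>2)} \<omega> \<partial>?P)"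
    using Am by (rule nn_integral_indicator[symmetric])
  also have "\<dots> \<le> (\<integral>\<^sup>+\<omega>. ennreal (1 / s\<^sup>2) * (\<Sum>u\<in>{1..t}. \<Sum>v\<in>{1..t}. ennreal ((\<omega> u)\<^sup>2) * ennreal ((\<omega> v)\<^sup>2)) \<partial>?P)"
  proof (intro nn_integral_mono)
    fix \<omega>
    have e: "(\<Sum>u\<in>{1..t}. \<Sum>v\<in>{1..t}. ennreal ((\<omega> u)\<^sup>2) * ennreal ((\<omega> v)\<^sup>2)) = ennreal ((\<Sum>u=1..t. (\<omega> u)\<^sup>2)\<^sup>2)"
    proof -
      have "(\<Sum>u\<in>{1..t}. \<Sum>v\<in>{1..t}. ennreal ((\<omega> u)\<^sup>2) * ennreal ((\<omega> v)\<^sup>2))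
          = (\<Sum>u\<in>{1..t}. \<Sum>v\<in>{1..t}. ennreal ((\<omega> u)\<^sup>2 * (\<omega> v)\<^sup>2))"
        by (simp add: ennreal_mult')
      also have "\<dots> = (\<Sum>u\<in>{1..t}. ennreal (\<Sum>v\<in>{1..t}. (\<omega> u)\<^sup>2 * (\<omega> v)\<^sup>2))"
        by (intro sum.cong refl sum_ennreal) auto
      also have "\<dots> = ennreal (\<Sum>u\<in>{1..t}. \<Sum>v\<in>{1..t}. (\<omega> u)\<^sup>2 * (\<omega> v)\<^sup>2)"
        by (intro sum_ennreal) (auto intro: sum_nonneg)
      also have "(\<Sum>u\<in>{1..t}. \<Sum>v\<in>{1..t}. (\<omega> u)\<^sup>2 * (\<omega> v)\<^sup>2) = (\<Sum>u=1..t. (\<omega> u)\<^sup>2)\<^sup>2"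
        by (simp add: power2_eq_square[of "sum _ _"] sum_product)
      finally show ?thesis .
    qed
    show "indicator {\<omega>. s \<le> (\<Sum>u=1..t. (\<omega> u)\<^sup>2)} \<omega> \<le> ennreal (1 / s\<^sup>2) * (\<Sum>u\<in>{1..t}. \<Sum>v\<in>{1..t}. ennreal ((\<omega> u)\<^sup>2) * ennreal ((\<omega> v)\<^sup>2))"
    proof (cases "s \<le> (\<Sum>u=1..t. (\<omega> u)\<^sup>2)")
      case True
      hence "s\<^sup>2 \<le> (\<Sum>u=1..t. (\<omega> u)\<^sup>2)\<^sup>2" using s by (intro power_mono) auto
      hence "1 \<le> 1 / s\<^sup>2 * (\<Sum>u=1..t. (\<omega> u)\<^sup>2)\<^sup>2" using s by (simp add: field_simps)
      hence "ennreal 1 \<le> ennreal (1 / s\<^sup>2 * (\<Sum>u=1..t. (\<omega> u)\<^sup>2)\<^sup>2)" by (rule ennreal_leI)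
      thus ?thesis using True unfolding e by (simp add: ennreal_mult'[symmetric] indicator_def)
    qed simp
  qed
  also have "\<dots> = ennreal (1 / s\<^sup>2) * (\<Sum>u\<in>{1..t}. \<Sum>v\<in>{1..t}. ?f u v)"
    by (subst nn_integral_cmult) (measurable, simp add: nn_integral_sum)
  also have "\<dots> \<le> ennreal (1 / s\<^sup>2) * (\<Sum>u\<in>{1..t}. ennreal (a4 + real t * a2\<^sup>2))"
    by (intro mult_left_mono sum_mono rowb) auto
  also have "\<dots> = ennreal ((real t * a4 + (real t)\<^sup>2 * a2\<^sup>2) / s\<^sup>2)"
  proof -
    have "(\<Sum>u\<in>{1..t}. ennreal (a4 + real t * a2\<^sup>2)) = ennreal (real t * (a4 + real t * a2\<^sup>2))"
      using a4 a2 by (simp add: ennreal_mult ennreal_of_nat_eq_real_of_nat)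
    moreover have "ennreal (1 / s\<^sup>2) * ennreal (real t * (a4 + real t * a2\<^sup>2)) = ennreal (1 / s\<^sup>2 * (real t * (a4 + real t * a2\<^sup>2)))"
      using a4 a2 by (intro ennreal_mult'[symmetric]) auto
    moreover have "1 / s\<^sup>2 * (real t * (a4 + real t * a2\<^sup>2)) = (real t * a4 + (real t)\<^sup>2 * a2\<^sup>2) / s\<^sup>2"
      by (simp add: field_simps power2_eq_square)
    ultimately show ?thesis by metis
  qed
  finally show ?thesis .
qed


lemma inv_sq_sum_aux:
  assumes "1 \<le> t0" "t0 \<le> n"
  shows "(\<Sum>t\<in>{t0..<n}. 1 / (real t)\<^sup>2) \<le> 2 / real t0 - 2 / real n"
  using assms(2)
proof (induction n rule: dec_induct)
  case base thus ?case by simp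
next
  case (step m)
  have m1: "1 \<le> m" using step assms by simp
  have rm: "1 \<le> real m" using m1 by simp
  have "2 / real m - 2 / real (Suc m) = 2 / (real m * (real m + 1))"
    using rm by (simp add: field_simps)
  also have "1 / (real m)\<^sup>2 \<le> 2 / (real m * (real m + 1))"
  proof -
    have le: "real m * (real m + 1) \<le> 2 * (real m)\<^sup>2" using rm by (simp add: power2_eq_square algebra_simps)
    have "2 / (2 * (real m)\<^sup>2) \<le> 2 / (real m * (real m + 1))"
      using rm by (intro divide_left_mono le) auto
    thus ?thesis by simp
  qed
  ultimately have "1 / (real m)\<^sup>2 \<le> 2 / real m - 2 / real (Suc m)" by simp
  thus ?case using step by simp
qed

lemma inv_sq_sum:
  assumes "1 \<le> t0"
  shows "(\<Sum>t\<in>{t0..<n}. 1 / (real t)\<^sup>2) \<le> 2 / real t0"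
proof (cases "t0 \<le> n")
  case True
  have "0 \<le> 2 / real n" by simp
  thus ?thesis using inv_sq_sum_aux[OF assms True] by linarith
next
  case False thus ?thesis by simp
qed

lemma geo_sum:
  assumes a: "0 < a"
  shows "(\<Sum>t\<in>{t0..<n}. exp (- a * real t)) \<le> 1 + 1 / a"
proof -
  define q where "q = exp (- a)"
  have q0: "0 < q" and q1: "q < 1" using a by (auto simp: q_def)
  have "(\<Sum>t\<in>{t0..<n}. exp (- a * real t)) \<le> (\<Sum>t\<in>{..<n}. exp (- a * real t))"
    by (intro sum_mono2) auto
  also have "\<dots> = (\<Sum>t<n. q ^ t)"
    by (intro sum.cong refl) (simp add: q_def exp_of_nat_mult[symmetric] mult.commute)
  also have "\<dots> = (1 - q ^ n) / (1 - q)" using q1 by (simp add: sum_gp_strict)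
  also have "\<dots> \<le> 1 / (1 - q)" using q0 q1 by (intro divide_right_mono) auto
  also have "\<dots> \<le> 1 + 1 / a"
  proof -
    have "1 + a \<le> exp a" by (rule exp_ge_add_one_self)
    hence "q * (1 + a) \<le> 1" using a by (simp add: q_def exp_minus field_simps)
    hence "1 \<le> (1 + 1 / a) * (1 - q)" using a by (simp add: field_simps)
    thus ?thesis using q1 by (simp add: field_simps)
  qed
  finally show ?thesis .
qed


lemma ET_main:
  fixes M :: "real measure"
  assumes P: "prob_space M" and S: "sets M = sets borel"
    and mu: "0 < \<mu>" "\<mu> \<le> 1" and h: "0 < h" and c: "1 \<le> c"
    and z: "\<zeta> \<le> (1 - 2*h) * \<mu>"
    and k: "0 < k" "k \<le> \<theta>"
    and mg: "(\<integral>\<^sup>+x. ennreal (exp ((- \<theta>) * x)) \<partial>M) \<le> ennreal (exp (- (1 - h/2) * \<theta> * \<mu>))"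
    and K: "0 \<le> K" "0 \<le> K2"
    and E4: "(\<integral>\<^sup>+x. ennreal (x ^ 4) \<partial>M) \<le> ennreal (K * \<mu>)"
    and E2: "(\<integral>\<^sup>+x. ennreal (x\<^sup>2) \<partial>M) \<le> ennreal (K2 * \<mu>)"
  shows "\<mu> * (\<integral>\<omega>. real (Tc_min \<zeta> c n \<omega>) \<partial>(\<Pi>\<^sub>M u\<in>(UNIV::nat set). M))
          \<le> c\<^sup>2 * (3 + 2 / (h * k) + 2 * (K + K2\<^sup>2) / h ^ 4)"
proof -
  let ?P = "\<Pi>\<^sub>M u\<in>(UNIV::nat set). M"
  interpret pps: product_prob_space "\<lambda>_::nat. M" UNIV
    by (simp add: P product_prob_space_axioms.intro product_prob_space_def product_sigma_finite_def prob_space_imp_sigma_finite)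
  note cm[measurable] = coord_meas[OF S]
  define t0 where "t0 = nat \<lceil>c\<^sup>2 / \<mu>\<rceil>"
  have c2: "1 \<le> c\<^sup>2" using c by (simp add: one_le_power)
  have t0ge: "c\<^sup>2 / \<mu> \<le> real t0" unfolding t0_def by linarith
  have t0le: "real t0 \<le> c\<^sup>2 / \<mu> + 1"
  proof -
    have "0 \<le> c\<^sup>2 / \<mu>" using mu by simp
    hence "real t0 = of_int \<lceil>c\<^sup>2 / \<mu>\<rceil>" unfolding t0_def by simp
    thus ?thesis by linarith
  qed
  have t01: "1 \<le> t0"
  proof -
    have "0 < c\<^sup>2 / \<mu>" using c2 mu by (intro divide_pos_pos) auto
    thus ?thesis using t0ge by linarith
  qed
  define A where "A t = {\<omega>. Ssum \<omega> t \<le> (1 - h) * real t * \<mu>}" for t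
  define B where "B t = {\<omega>. (h * real t * \<mu> / c)\<^sup>2 \<le> (\<Sum>u=1..t. (\<omega> u)\<^sup>2)}" for t
  have Am: "A t \<in> sets ?P" for t
  proof -
    have "A t = {\<omega>\<in>space ?P. Ssum \<omega> t \<le> (1 - h) * real t * \<mu>}" by (simp add: A_def space_iid[OF S])
    also have "\<dots> \<in> sets ?P" unfolding Ssum_def by measurable
    finally show ?thesis .
  qed
  have Bm: "B t \<in> sets ?P" for t
  proof -
    have "B t = {\<omega>\<in>space ?P. (h * real t * \<mu> / c)\<^sup>2 \<le> (\<Sum>u=1..t. (\<omega> u)\<^sup>2)}" by (simp add: B_def space_iid[OF S])
    also have "\<dots> \<in> sets ?P" by measurable
    finally show ?thesis .
  qed
  define G where "G \<omega> = real t0 + (\<Sum>t\<in>{t0..<n}. indicator (A t) \<omega> + indicator (B t) \<omega>)" for \<omega>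
  have TG: "real (Tc_min \<zeta> c n \<omega>) \<le> G \<omega>" for \<omega>
  proof -
    have "real (Tc_min \<zeta> c n \<omega>) \<le> real t0 + (\<Sum>t\<in>{t0..<n}. indicator {\<omega>. \<not> stop_cond \<zeta> c \<omega> t} \<omega>)"
      by (rule Tc_bound[OF t01])
    also have "\<dots> \<le> G \<omega>" unfolding G_def
    proof (intro add_left_mono sum_mono)
      fix t assume t: "t \<in> {t0..<n}"
      hence t1: "1 \<le> t" using t01 by simp
      show "indicator {\<omega>. \<not> stop_cond \<zeta> c \<omega> t} \<omega> \<le> (indicator (A t) \<omega> + indicator (B t) \<omega> :: real)"
      proof (cases "stop_cond \<zeta> c \<omega> t")
        case False
        from nonstop_split[OF t1 _ h mu(1) z False] c
        have "\<omega> \<in> A t \<or> \<omega> \<in> B t" by (auto simp: A_def B_def)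
        thus ?thesis using False by (auto simp: indicator_def)
      qed (simp add: indicator_def)
    qed
    finally show ?thesis .
  qed
  have Gint: "integrable ?P G"
    unfolding G_def using Am Bm
    by (intro Bochner_Integration.integrable_add Bochner_Integration.integrable_sum pps.P.integrable_const integrable_real_indicator) (auto simp: less_top[symmetric])
  have IG: "(\<integral>\<omega>. G \<omega> \<partial>?P) = real t0 + (\<Sum>t\<in>{t0..<n}. measure ?P (A t) + measure ?P (B t))"
  proof -
    have ii: "integrable ?P (indicator (A t) :: _ \<Rightarrow> real)" "integrable ?P (indicator (B t) :: _ \<Rightarrow> real)" for t
      using Am Bm by (auto simp: less_top[symmetric])
    have "(\<integral>\<omega>. G \<omega> \<partial>?P) = (\<integral>\<omega>. real t0 \<partial>?P) + (\<integral>\<omega>. (\<Sum>t\<in>{t0..<n}. indicator (A t) \<omega> + indicator (B t) \<omega>) \<partial>?P)"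
      unfolding G_def using ii
      by (intro Bochner_Integration.integral_add pps.P.integrable_const Bochner_Integration.integrable_sum Bochner_Integration.integrable_add) auto
    also have "(\<integral>\<omega>. (\<Sum>t\<in>{t0..<n}. indicator (A t) \<omega> + indicator (B t) \<omega>) \<partial>?P)
       = (\<Sum>t\<in>{t0..<n}. (\<integral>\<omega>. indicator (A t) \<omega> + indicator (B t) \<omega> \<partial>?P) :: real)"
      by (rule Bochner_Integration.integral_sum) (use ii in auto)
    also have "\<dots> = (\<Sum>t\<in>{t0..<n}. measure ?P (A t) + measure ?P (B t))"
      using ii Am Bm by (intro sum.cong refl) (simp add: Bochner_Integration.integral_add)
    finally show ?thesis by (simp add: pps.P.prob_space)
  qed
  have ET_le: "(\<integral>\<omega>. real (Tc_min \<zeta> c n \<omega>) \<partial>?P) \<le> (\<integral>\<omega>. G \<omega> \<partial>?P)"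
  proof (cases "integrable ?P (\<lambda>\<omega>. real (Tc_min \<zeta> c n \<omega>))")
    case True thus ?thesis using Gint TG by (intro integral_mono) auto
  next
    case False
    have "0 \<le> (\<integral>\<omega>. G \<omega> \<partial>?P)" by (rule Bochner_Integration.integral_nonneg) (auto simp: G_def intro!: sum_nonneg add_nonneg_nonneg)
    thus ?thesis using False by (simp add: not_integrable_integral_eq)
  qed
  have hk: "0 < h * k * \<mu> / 2" using h k mu by simp
  have mA: "measure ?P (A t) \<le> exp (- (h * k * \<mu> / 2) * real t)" for t
  proof -
    have th0: "0 \<le> \<theta>" using k by simp
    have "emeasure ?P (A t) \<le> ennreal (exp (\<theta> * ((1 - h) * real t * \<mu>)) * exp (- (1 - h/2) * \<theta> * \<mu>) ^ t)"
      unfolding A_def by (rule chernoff[OF P S th0 _ mg]) simp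
    also have "exp (\<theta> * ((1 - h) * real t * \<mu>)) * exp (- (1 - h/2) * \<theta> * \<mu>) ^ t = exp (- (h * \<theta> * \<mu> / 2) * real t)"
      by (simp add: exp_of_nat_mult[symmetric] exp_add[symmetric] algebra_simps)
    also have "exp (- (h * \<theta> * \<mu> / 2) * real t) \<le> exp (- (h * k * \<mu> / 2) * real t)"
    proof -
      have "h * k * \<mu> * real t \<le> h * \<theta> * \<mu> * real t"
        using h k mu by (intro mult_right_mono) auto
      thus ?thesis by simp
    qed
    finally have "emeasure ?P (A t) \<le> ennreal (exp (- (h * k * \<mu> / 2) * real t))"
      by (simp add: ennreal_leI)
    thus ?thesis by (simp add: pps.P.emeasure_eq_measure)
  qed
  have mB: "measure ?P (B t) \<le> (K + K2\<^sup>2) * c ^ 4 / (h ^ 4 * \<mu>\<^sup>2 * (real t)\<^sup>2)" if t: "t0 \<le> t" for t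
  proof -
    have t1: "1 \<le> real t" using t t01 by simp
    have tmu: "1 \<le> real t * \<mu>"
    proof -
      have "c\<^sup>2 \<le> real t0 * \<mu>" using t0ge mu by (simp add: field_simps)
      also have "\<dots> \<le> real t * \<mu>" using t mu by (intro mult_right_mono) auto
      finally show ?thesis using c2 by simp
    qed
    define s where "s = (h * real t * \<mu> / c)\<^sup>2"
    have s0: "0 < s" unfolding s_def using h mu t1 c by simp
    have E2': "(\<integral>\<^sup>+x. ennreal (x\<^sup>2) \<partial>M) \<le> ennreal (K2 * \<mu>)" by (rule E2)
    have "emeasure ?P (B t) \<le> ennreal ((real t * (K * \<mu>) + (real t)\<^sup>2 * (K2 * \<mu>)\<^sup>2) / s\<^sup>2)"
      unfolding B_def s_def[symmetric]
      by (rule sq_tail[OF P S s0 _ _ E4 E2']) (use K mu in auto)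
    hence m: "measure ?P (B t) \<le> (real t * (K * \<mu>) + (real t)\<^sup>2 * (K2 * \<mu>)\<^sup>2) / s\<^sup>2"
      using K mu s0 by (simp add: pps.P.emeasure_eq_measure ennreal_le_iff)
    have "real t * (K * \<mu>) \<le> (real t)\<^sup>2 * \<mu>\<^sup>2 * K"
    proof -
      have "real t * \<mu> * K * 1 \<le> real t * \<mu> * K * (real t * \<mu>)"
        using tmu K mu t1 by (intro mult_left_mono) auto
      thus ?thesis by (simp add: power2_eq_square algebra_simps)
    qed
    hence "(real t * (K * \<mu>) + (real t)\<^sup>2 * (K2 * \<mu>)\<^sup>2) \<le> (real t)\<^sup>2 * \<mu>\<^sup>2 * (K + K2\<^sup>2)"
      by (simp add: power2_eq_square algebra_simps)
    hence "(real t * (K * \<mu>) + (real t)\<^sup>2 * (K2 * \<mu>)\<^sup>2) / s\<^sup>2 \<le> (real t)\<^sup>2 * \<mu>\<^sup>2 * (K + K2\<^sup>2) / s\<^sup>2"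
      using s0 by (intro divide_right_mono) auto
    also have "\<dots> = (K + K2\<^sup>2) * c ^ 4 / (h ^ 4 * \<mu>\<^sup>2 * (real t)\<^sup>2)"
      unfolding s_def using h mu t1 c by (simp add: field_simps power2_eq_square power4_eq_xxxx)
    finally show ?thesis using m by linarith
  qed
  have sumA: "(\<Sum>t\<in>{t0..<n}. measure ?P (A t)) \<le> 1 + 1 / (h * k * \<mu> / 2)"
    using sum_mono[of "{t0..<n}" "\<lambda>t. measure ?P (A t)", OF mA] geo_sum[OF hk, of t0 n] by linarith
  have sumB: "(\<Sum>t\<in>{t0..<n}. measure ?P (B t)) \<le> 2 * (K + K2\<^sup>2) * c\<^sup>2 / (h ^ 4 * \<mu>)"
  proof -
    have "(\<Sum>t\<in>{t0..<n}. measure ?P (B t)) \<le> (\<Sum>t\<in>{t0..<n}. (K + K2\<^sup>2) * c ^ 4 / (h ^ 4 * \<mu>\<^sup>2) * (1 / (real t)\<^sup>2))"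
      by (intro sum_mono) (use mB in auto)
    also have "\<dots> = (K + K2\<^sup>2) * c ^ 4 / (h ^ 4 * \<mu>\<^sup>2) * (\<Sum>t\<in>{t0..<n}. 1 / (real t)\<^sup>2)"
      by (simp add: sum_distrib_left)
    also have "\<dots> \<le> (K + K2\<^sup>2) * c ^ 4 / (h ^ 4 * \<mu>\<^sup>2) * (2 / real t0)"
      using K h mu by (intro mult_left_mono inv_sq_sum[OF t01]) auto
    also have "2 / real t0 \<le> 2 * \<mu> / c\<^sup>2"
    proof -
      have p: "0 < c\<^sup>2 / \<mu>" using c2 mu by (intro divide_pos_pos) auto
      have "0 < real t0 * (c\<^sup>2 / \<mu>)" using p t0ge by (intro mult_pos_pos) auto
      hence "2 / real t0 \<le> 2 / (c\<^sup>2 / \<mu>)" using t0ge by (intro divide_left_mono) (auto simp: mult_pos_pos)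
      thus ?thesis by simp
    qed
    hence "(K + K2\<^sup>2) * c ^ 4 / (h ^ 4 * \<mu>\<^sup>2) * (2 / real t0) \<le> (K + K2\<^sup>2) * c ^ 4 / (h ^ 4 * \<mu>\<^sup>2) * (2 * \<mu> / c\<^sup>2)"
      using K h mu by (intro mult_left_mono) auto
    also have "\<dots> = 2 * (K + K2\<^sup>2) * c\<^sup>2 / (h ^ 4 * \<mu>)"
      using mu c2 c h by (simp add: field_simps power2_eq_square power4_eq_xxxx)
    finally show ?thesis .
  qed
  have "\<mu> * (\<integral>\<omega>. real (Tc_min \<zeta> c n \<omega>) \<partial>?P) \<le> \<mu> * (real t0 + (\<Sum>t\<in>{t0..<n}. measure ?P (A t)) + (\<Sum>t\<in>{t0..<n}. measure ?P (B t)))"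
    using ET_le IG mu by (simp add: sum.distrib mult_left_mono add.assoc)
  also have "\<dots> \<le> \<mu> * ((c\<^sup>2 / \<mu> + 1) + (1 + 1 / (h * k * \<mu> / 2)) + 2 * (K + K2\<^sup>2) * c\<^sup>2 / (h ^ 4 * \<mu>))"
    using t0le sumA sumB mu by (intro mult_left_mono add_mono) auto
  also have "\<dots> = c\<^sup>2 + 2 * \<mu> + 2 / (h * k) + 2 * (K + K2\<^sup>2) * c\<^sup>2 / h ^ 4"
    using mu h k by (simp add: field_simps)
  also have "\<dots> \<le> c\<^sup>2 + 2 * c\<^sup>2 + 2 * c\<^sup>2 / (h * k) + 2 * (K + K2\<^sup>2) * c\<^sup>2 / h ^ 4"
  proof -
    have "2 / (h * k) \<le> 2 * c\<^sup>2 / (h * k)" using c2 h k by (simp add: divide_right_mono)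
    thus ?thesis using mu c2 by linarith
  qed
  also have "\<dots> = c\<^sup>2 * (3 + 2 / (h * k) + 2 * (K + K2\<^sup>2) / h ^ 4)"
    by (simp add: algebra_simps)
  finally show ?thesis .
qed


lemma powr_integral_bound:
  fixes \<beta> a b :: real
  assumes \<beta>: "0 < \<beta>" and a: "0 < a"
  shows "(\<integral>\<^sup>+x. ennreal (x powr (\<beta> - 1)) * indicator {a..b} x \<partial>lborel) \<le> ennreal (b powr \<beta> / \<beta>)"
proof (cases "a \<le> b")
  case True
  have "(\<integral>\<^sup>+x. ennreal (x powr (\<beta> - 1)) * indicator {a..b} x \<partial>lborel) = ennreal (b powr \<beta> / \<beta> - a powr \<beta> / \<beta>)"
  proof (rule nn_integral_FTC_Icc[where F = "\<lambda>x. x powr \<beta> / \<beta>"])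
    show "(\<lambda>x. x powr (\<beta> - 1)) \<in> borel_measurable borel" by measurable
    fix x assume x: "x \<in> {a..b}"
    hence x0: "0 < x" using a by simp
    show "0 \<le> x powr (\<beta> - 1)" by simp
    have "((\<lambda>x. x powr \<beta> / \<beta>) has_real_derivative (\<beta> * x powr (\<beta> - 1)) / \<beta>) (at x)"
      using x0 \<beta> by (intro derivative_eq_intros) auto
    thus "((\<lambda>x. x powr \<beta> / \<beta>) has_real_derivative x powr (\<beta> - 1)) (at x)" using \<beta> by simp
  qed (use True in auto)
  also have "\<dots> \<le> ennreal (b powr \<beta> / \<beta>)"
    using \<beta> by (intro ennreal_leI) simp
  finally show ?thesis .
next
  case False
  hence "{a..b} = {}" by simp
  thus ?thesis by simp
qed


lemma cond_mean_ge:
  assumes P: "prob_space (F \<mu>)" and S: "sets (F \<mu>) = sets borel" and nn: "AE x in F \<mu>. 0 \<le> x"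
    and mean: "(\<integral>x. x \<partial>F \<mu>) = \<mu>" and mu: "0 < \<mu>"
    and m0: "0 < measure (F \<mu>) {0<..}"
  shows "\<mu> \<le> cond_mean F \<mu>"
proof -
  interpret prob_space "F \<mu>" by (rule P)
  have "(\<integral>x. x * indicator {0<..} x \<partial>F \<mu>) = (\<integral>x. x \<partial>F \<mu>)"
  proof (rule integral_cong_AE)
    show "(\<lambda>x. x * indicator {0<..} x) \<in> borel_measurable (F \<mu>)"
      using S by (simp add: measurable_cong_sets[OF S refl])
    show "(\<lambda>x. x) \<in> borel_measurable (F \<mu>)"
      using S by (simp add: measurable_cong_sets[OF S refl])
    show "AE x in F \<mu>. x * indicator {0<..} x = x"
      using nn by eventually_elim (auto simp: indicator_def)
  qed
  hence cm: "cond_mean F \<mu> = \<mu> / measure (F \<mu>) {0<..}" unfolding cond_mean_def mean by simp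
  have "measure (F \<mu>) {0<..} \<le> 1" by (rule prob_le_1)
  hence "\<mu> / 1 \<le> \<mu> / measure (F \<mu>) {0<..}" using m0 mu by (intro divide_left_mono) auto
  thus ?thesis using cm by simp
qed

lemma lam_pos:
  fixes g :: "real \<Rightarrow> real" and F :: "real \<Rightarrow> real measure"
  assumes g_nonneg: "\<forall>\<mu>>0. g \<mu> \<ge> 0"
    and g_total: "(LBINT \<mu>:{0<..}. g \<mu>) = 1"
    and lam_int: "set_integrable lborel {0<..} (\<lambda>\<mu>. cond_mean F \<mu> * g \<mu>)"
    and cm: "\<And>\<mu>. 0 < \<mu> \<Longrightarrow> \<mu> \<le> cond_mean F \<mu>"
  shows "0 < (LBINT \<mu>:{0<..}. cond_mean F \<mu> * g \<mu>)"
proof -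
  let ?f = "\<lambda>\<mu>::real. (indicator {0<..} \<mu> :: real) *\<^sub>R (cond_mean F \<mu> * g \<mu>)"
  have fnn: "0 \<le> ?f \<mu>" for \<mu>
  proof (cases "0 < \<mu>")
    case True thus ?thesis using cm[OF True] g_nonneg by (simp add: indicator_def)
  qed (simp add: indicator_def)
  have int: "integrable lborel ?f" using lam_int unfolding set_integrable_def .
  have ge: "0 \<le> integral\<^sup>L lborel ?f" by (rule Bochner_Integration.integral_nonneg) (use fnn in auto)
  have ne: "integral\<^sup>L lborel ?f \<noteq> 0"
  proof
    assume "integral\<^sup>L lborel ?f = 0"
    hence "AE \<mu> in lborel. ?f \<mu> = 0" using integral_nonneg_eq_0_iff_AE[OF int] fnn by simp
    hence "AE \<mu> in lborel. indicator {0<..} \<mu> *\<^sub>R g \<mu> = 0"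
    proof eventually_elim
      case (elim \<mu>)
      show ?case
      proof (cases "0 < \<mu>")
        case True
        have "0 < cond_mean F \<mu>" using cm[OF True] True by simp
        thus ?thesis using elim True by (simp add: indicator_def)
      qed (simp add: indicator_def)
    qed
    hence "(LBINT \<mu>:{0<..}. g \<mu>) = 0" unfolding set_lebesgue_integral_def by (rule integral_eq_zero_AE)
    with g_total show False by simp
  qed
  show ?thesis using ge ne unfolding set_lebesgue_integral_def by simp
qed


theorem lemma6:
  fixes g :: "real \<Rightarrow> real" and F :: "real \<Rightarrow> real measure"
    and \<alpha> \<beta> lam C \<omega> \<epsilon> :: real
    and c \<zeta> d :: "nat \<Rightarrow> real"
  assumes g_nonneg: "\<forall>\<mu>>0. g \<mu> \<ge> 0"
    and g_int: "set_integrable lborel {0<..} g"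
    and g_total: "(LBINT \<mu>:{0<..}. g \<mu>) = 1"
    and F_prob: "\<forall>\<mu>>0. prob_space (F \<mu>)"
    and F_sets: "\<forall>\<mu>>0. sets (F \<mu>) = sets borel"
    and F_nonneg: "\<forall>\<mu>>0. AE x in F \<mu>. 0 \<le> x"
    and F_int: "\<forall>\<mu>>0. integrable (F \<mu>) (\<lambda>x. x)"
    and F_mean: "\<forall>\<mu>>0. (\<integral>x. x \<partial>F \<mu>) = \<mu>"
    and lam_int: "set_integrable lborel {0<..} (\<lambda>\<mu>. cond_mean F \<mu> * g \<mu>)"
    and lam_def: "lam = (LBINT \<mu>:{0<..}. cond_mean F \<mu> * g \<mu>)"
    and A1: "\<alpha> > 0" "\<beta> > 0" "g \<sim>[at_right 0] (\<lambda>\<mu>. \<alpha> * \<mu> powr (\<beta> - 1))"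
    and A2: "\<exists>a1>0. \<forall>\<mu>>0. measure (F \<mu>) {0<..} \<ge> a1 * min \<mu> 1"
    and B: "(\<forall>\<mu>>0. AE x in F \<mu>. x \<in> \<nat>)
             \<and> (\<forall>\<delta>. 0 < \<delta> \<and> \<delta> \<le> 1 \<longrightarrow> (\<exists>thd>0. \<forall>\<mu>>0. \<forall>\<theta>. 0 \<le> \<theta> \<and> \<theta> \<le> thd \<longrightarrow>
                   mgf F \<mu> \<theta> \<le> ennreal (exp ((1 + \<delta>) * \<theta> * \<mu>))
                 \<and> mgf F \<mu> (- \<theta>) \<le> ennreal (exp (- (1 - \<delta>) * \<theta> * \<mu>))))
             \<and> (\<exists>a2>0. \<forall>\<mu>>0. measure (F \<mu>) {0<..} \<le> a2 * \<mu>)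
             \<and> (\<forall>\<^sub>F \<mu> in at_right 0. integrable (F \<mu>) (\<lambda>x. x ^ 4))
             \<and> fourth_moment F \<in> O[at_right 0](\<lambda>\<mu>. \<mu>)
           \<or>
             (\<forall>\<mu>>0. \<forall>x. measure (F \<mu>) {x} = 0)
             \<and> ((\<lambda>\<gamma>. SUP \<mu>\<in>{0<..}. measure (F \<mu>) {..\<gamma> * \<mu>}) \<longlongrightarrow> 0) (at_right 0)
             \<and> (\<forall>\<^sub>F \<mu> in at_right 0. integrable (F \<mu>) (\<lambda>x. x ^ 4))
             \<and> fourth_moment F \<in> O[at_right 0](\<lambda>\<mu>. \<mu>)
             \<and> (\<forall>\<delta>. 0 < \<delta> \<and> \<delta> \<le> 1 \<longrightarrow> (\<exists>tad>0. \<forall>\<mu>>0. \<forall>\<theta>>0. \<theta> * \<mu> \<le> tad \<longrightarrow>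
                   mgf F \<mu> \<theta> \<le> ennreal (exp ((1 + \<delta>) * \<theta> * \<mu>))
                 \<and> mgf F \<mu> (- \<theta>) \<le> ennreal (exp (- (1 - \<delta>) * \<theta> * \<mu>))))
             \<and> (\<forall>t::nat. t \<ge> 1 \<longrightarrow> (\<exists>\<xi>>0.
                   ((\<lambda>\<gamma>. SUP \<mu>\<in>{0<..\<xi>}. measure (iidM F \<mu>) {w. sigma2 w t \<le> \<gamma> * \<mu>\<^sup>2})
                      \<longlongrightarrow> 0) (at_right 0)))"
    and c_lim: "filterlim c at_top sequentially"
    and c_small: "\<forall>\<delta>>0. c \<in> o(\<lambda>n. real n powr \<delta>)"
    and C_def: "C = (lam * \<beta> * (\<beta> + 1) / \<alpha>) powr (1 / (\<beta> + 1))"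
    and zeta_asym: "\<zeta> \<sim>[sequentially] (\<lambda>n. C * real n powr (- 1 / (\<beta> + 1)))"
    and omega: "0 < \<omega>" "\<omega> < 1 / (\<beta> + 1)"
    and d_def: "\<forall>n. d n = real n powr (- \<omega>)"
    and eps: "\<epsilon> > 0"
  shows "((\<lambda>n. SUP \<mu>\<in>{(1 + \<epsilon>) * \<zeta> n .. d n}. \<mu> * ET F (\<zeta> n) (c n) n \<mu>)
           \<in> O(\<lambda>n. (c n) ^ 3 + ln (real n)))
         \<and> ((\<lambda>n. \<integral>\<^sup>+\<mu>. ennreal (indicator {(1 + \<epsilon>) * \<zeta> n .. d n} \<mu> * g \<mu> * \<mu>
                                  * ET F (\<zeta> n) (c n) n \<mu>) \<partial>lborel) \<longlongrightarrow> 0) sequentially"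
proof -
  define h where "h = \<epsilon> / (2 * (1 + \<epsilon>))"
  have h0: "0 < h" using eps by (simp add: h_def)
  have h1: "h \<le> 1" using eps by (simp add: h_def field_simps)
  have hz: "\<zeta>' \<le> (1 - 2*h) * \<mu>" if "(1 + \<epsilon>) * \<zeta>' \<le> \<mu>" for \<zeta>' \<mu>
  proof -
    have "1 - 2*h = 1 / (1 + \<epsilon>)" using eps by (simp add: h_def field_simps)
    moreover have "\<zeta>' \<le> \<mu> / (1 + \<epsilon>)" using that eps by (simp add: pos_le_divide_eq mult.commute)
    ultimately show ?thesis by simp
  qed
  have \<delta>: "0 < h/2" "h/2 \<le> 1" using h0 h1 by auto
  obtain k where k0: "0 < k" and kk: "\<And>\<mu>. 0 < \<mu> \<Longrightarrow> \<mu> \<le> 1 \<Longrightarrow>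
      \<exists>\<theta>. k \<le> \<theta> \<and> mgf F \<mu> (- \<theta>) \<le> ennreal (exp (- (1 - h/2) * \<theta> * \<mu>))"
  proof -
    from B show ?thesis
    proof (elim disjE conjE)
      assume B1: "\<forall>\<delta>. 0 < \<delta> \<and> \<delta> \<le> 1 \<longrightarrow> (\<exists>thd>0. \<forall>\<mu>>0. \<forall>\<theta>. 0 \<le> \<theta> \<and> \<theta> \<le> thd \<longrightarrow>
                   mgf F \<mu> \<theta> \<le> ennreal (exp ((1 + \<delta>) * \<theta> * \<mu>))
                 \<and> mgf F \<mu> (- \<theta>) \<le> ennreal (exp (- (1 - \<delta>) * \<theta> * \<mu>)))"
      then obtain thd where thd: "0 < thd" "\<forall>\<mu>>0. \<forall>\<theta>. 0 \<le> \<theta> \<and> \<theta> \<le> thd \<longrightarrow>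
                   mgf F \<mu> \<theta> \<le> ennreal (exp ((1 + h/2) * \<theta> * \<mu>))
                 \<and> mgf F \<mu> (- \<theta>) \<le> ennreal (exp (- (1 - h/2) * \<theta> * \<mu>))"
        using \<delta> by blast
      show ?thesis
      proof (rule that[OF thd(1)])
        fix \<mu> :: real assume "0 < \<mu>" "\<mu> \<le> 1"
        thus "\<exists>\<theta>. thd \<le> \<theta> \<and> mgf F \<mu> (- \<theta>) \<le> ennreal (exp (- (1 - h/2) * \<theta> * \<mu>))"
          using thd by (intro exI[of _ thd]) auto
      qed
    next
      assume B2: "\<forall>\<delta>. 0 < \<delta> \<and> \<delta> \<le> 1 \<longrightarrow> (\<exists>tad>0. \<forall>\<mu>>0. \<forall>\<theta>>0. \<theta> * \<mu> \<le> tad \<longrightarrow>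
                   mgf F \<mu> \<theta> \<le> ennreal (exp ((1 + \<delta>) * \<theta> * \<mu>))
                 \<and> mgf F \<mu> (- \<theta>) \<le> ennreal (exp (- (1 - \<delta>) * \<theta> * \<mu>)))"
      then obtain tad where tad: "0 < tad" "\<forall>\<mu>>0. \<forall>\<theta>>0. \<theta> * \<mu> \<le> tad \<longrightarrow>
                   mgf F \<mu> \<theta> \<le> ennreal (exp ((1 + h/2) * \<theta> * \<mu>))
                 \<and> mgf F \<mu> (- \<theta>) \<le> ennreal (exp (- (1 - h/2) * \<theta> * \<mu>))"
        using \<delta> by blast
      show ?thesis
      proof (rule that[OF tad(1)])
        fix \<mu> :: real assume mu: "0 < \<mu>" "\<mu> \<le> 1"
        have "tad \<le> tad / \<mu>" using mu tad(1) by (simp add: field_simps mult_left_le)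
        moreover have "0 < tad / \<mu>" using mu tad(1) by simp
        moreover have "tad / \<mu> * \<mu> \<le> tad" using mu by simp
        ultimately show "\<exists>\<theta>. tad \<le> \<theta> \<and> mgf F \<mu> (- \<theta>) \<le> ennreal (exp (- (1 - h/2) * \<theta> * \<mu>))"
          using tad(2) mu by (intro exI[of _ "tad / \<mu>"]) blast
      qed
    qed
  qed
  have mom: "(\<forall>\<^sub>F \<mu> in at_right 0. integrable (F \<mu>) (\<lambda>x. x ^ 4)) \<and> fourth_moment F \<in> O[at_right 0](\<lambda>\<mu>. \<mu>)"
    using B by blast
  then obtain K0 where K0: "0 < K0" and K0ev: "\<forall>\<^sub>F \<mu> in at_right 0. norm (fourth_moment F \<mu>) \<le> K0 * norm \<mu>"
    by (auto elim: landau_o.bigE)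
  have "\<forall>\<^sub>F \<mu> in at_right 0. integrable (F \<mu>) (\<lambda>x. x ^ 4) \<and> norm (fourth_moment F \<mu>) \<le> K0 * norm \<mu>"
    using mom K0ev by (auto intro: eventually_conj)
  then obtain \<xi>m where \<xi>m: "0 < \<xi>m" and \<xi>mP: "\<And>\<mu>. 0 < \<mu> \<Longrightarrow> \<mu> < \<xi>m \<Longrightarrow>
      integrable (F \<mu>) (\<lambda>x. x ^ 4) \<and> norm (fourth_moment F \<mu>) \<le> K0 * norm \<mu>"
    unfolding eventually_at_right_field by auto
  have moments: "(\<integral>\<^sup>+x. ennreal (x ^ 4) \<partial>F \<mu>) \<le> ennreal (K0 * \<mu>) \<and> (\<integral>\<^sup>+x. ennreal (x\<^sup>2) \<partial>F \<mu>) \<le> ennreal ((1 + K0) * \<mu>)"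
    if mu: "0 < \<mu>" "\<mu> < \<xi>m" for \<mu>
  proof -
    have S: "sets (F \<mu>) = sets borel" using F_sets mu by simp
    have nn: "AE x in F \<mu>. 0 \<le> x" using F_nonneg mu by simp
    have i4: "integrable (F \<mu>) (\<lambda>x. x ^ 4)" and fm: "norm (fourth_moment F \<mu>) \<le> K0 * norm \<mu>" using \<xi>mP[OF mu] by auto
    have i1: "integrable (F \<mu>) (\<lambda>x. x)" using F_int mu by simp
    have e4: "(\<integral>\<^sup>+x. ennreal (x ^ 4) \<partial>F \<mu>) = ennreal (fourth_moment F \<mu>)"
      unfolding fourth_moment_def using i4 by (intro nn_integral_eq_integral) auto
    have fm': "fourth_moment F \<mu> \<le> K0 * \<mu>" using fm mu by simp
    have "(\<integral>\<^sup>+x. ennreal (x\<^sup>2) \<partial>F \<mu>) \<le> (\<integral>\<^sup>+x. ennreal (x + x ^ 4) \<partial>F \<mu>)"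
    proof (rule nn_integral_mono_AE)
      show "AE x in F \<mu>. ennreal (x\<^sup>2) \<le> ennreal (x + x ^ 4)"
        using nn
      proof eventually_elim
        case (elim x)
        have "x\<^sup>2 \<le> x + x ^ 4"
        proof (cases "x \<le> 1")
          case True
          hence "x\<^sup>2 \<le> x" using elim by (simp add: power2_eq_square mult_left_le)
          moreover have "0 \<le> x ^ 4" by simp
          ultimately show ?thesis by linarith
        next
          case False
          hence "x\<^sup>2 \<le> x ^ 4" by (simp add: power_increasing)
          thus ?thesis using False by linarith
        qed
        thus ?case by (rule ennreal_leI)
      qed
    qed
    also have "\<dots> = ennreal (\<integral>x. x + x ^ 4 \<partial>F \<mu>)"
      using i1 i4 nn by (intro nn_integral_eq_integral) auto
    also have "(\<integral>x. x + x ^ 4 \<partial>F \<mu>) = \<mu> + fourth_moment F \<mu>"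
      using i1 i4 F_mean mu unfolding fourth_moment_def by (simp add: Bochner_Integration.integral_add)
    finally have e2a: "(\<integral>\<^sup>+x. ennreal (x\<^sup>2) \<partial>F \<mu>) \<le> ennreal (\<mu> + fourth_moment F \<mu>)" .
    have "ennreal (\<mu> + fourth_moment F \<mu>) \<le> ennreal ((1 + K0) * \<mu>)"
      using fm' by (intro ennreal_leI) (simp add: algebra_simps)
    with e2a have e2: "(\<integral>\<^sup>+x. ennreal (x\<^sup>2) \<partial>F \<mu>) \<le> ennreal ((1 + K0) * \<mu>)" by (rule order_trans)
    show ?thesis using e4 fm' e2 by (simp add: ennreal_leI)
  qed
  have gev: "\<forall>\<^sub>F \<mu> in at_right 0. g \<mu> \<le> 2 * \<alpha> * \<mu> powr (\<beta> - 1)"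
  proof -
    have nz: "\<forall>\<^sub>F \<mu> in at_right (0::real). g \<mu> \<noteq> 0 \<or> \<alpha> * \<mu> powr (\<beta> - 1) \<noteq> 0"
      using eventually_at_right_less[of "0::real"] by eventually_elim (use A1(1) in simp)
    have lim: "((\<lambda>\<mu>. g \<mu> / (\<alpha> * \<mu> powr (\<beta> - 1))) \<longlongrightarrow> 1) (at_right 0)"
      by (rule asymp_equivD_strong[OF A1(3) nz])
    have "\<forall>\<^sub>F \<mu> in at_right 0. g \<mu> / (\<alpha> * \<mu> powr (\<beta> - 1)) < 2"
      using order_tendstoD(2)[OF lim, of 2] by simp
    thus ?thesis using eventually_at_right_less[of 0]
    proof eventually_elim
      case (elim \<mu>)
      have "0 < \<alpha> * \<mu> powr (\<beta> - 1)" using A1(1) elim by simp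
      thus ?case using elim by (simp add: divide_less_eq)
    qed
  qed
  then obtain \<xi>g where \<xi>g: "0 < \<xi>g" and \<xi>gP: "\<And>\<mu>. 0 < \<mu> \<Longrightarrow> \<mu> < \<xi>g \<Longrightarrow> g \<mu> \<le> 2 * \<alpha> * \<mu> powr (\<beta> - 1)"
    unfolding eventually_at_right_field by auto
  define K2 where "K2 = 1 + K0"
  define Bc where "Bc = 3 + 2 / (h * k) + 2 * (K0 + K2\<^sup>2) / h ^ 4"
  have Bc0: "0 < Bc" unfolding Bc_def using h0 k0 K0 by (intro add_pos_nonneg) auto
  have key: "0 \<le> \<mu> * ET F (\<zeta> n) (c n) n \<mu> \<and> \<mu> * ET F (\<zeta> n) (c n) n \<mu> \<le> (c n)\<^sup>2 * Bc"
    if c1: "1 \<le> c n" and z0: "0 < (1 + \<epsilon>) * \<zeta> n" and d1: "d n \<le> 1" and dm: "d n < \<xi>m"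
      and mu: "(1 + \<epsilon>) * \<zeta> n \<le> \<mu>" "\<mu> \<le> d n" for n \<mu>
  proof -
    have mu0: "0 < \<mu>" using z0 mu by simp
    have mu1: "\<mu> \<le> 1" using mu d1 by simp
    have mum: "\<mu> < \<xi>m" using mu dm by simp
    obtain \<theta> where th: "k \<le> \<theta>" and mg: "mgf F \<mu> (- \<theta>) \<le> ennreal (exp (- (1 - h/2) * \<theta> * \<mu>))"
      using kk[OF mu0 mu1] by blast
    have mg': "(\<integral>\<^sup>+x. ennreal (exp ((- \<theta>) * x)) \<partial>F \<mu>) \<le> ennreal (exp (- (1 - h/2) * \<theta> * \<mu>))"
      using mg unfolding mgf_def .
    have m4: "(\<integral>\<^sup>+x. ennreal (x ^ 4) \<partial>F \<mu>) \<le> ennreal (K0 * \<mu>)"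
      and m2: "(\<integral>\<^sup>+x. ennreal (x\<^sup>2) \<partial>F \<mu>) \<le> ennreal (K2 * \<mu>)"
      using moments[OF mu0 mum] unfolding K2_def by auto
    have "\<mu> * (\<integral>\<omega>. real (Tc_min (\<zeta> n) (c n) n \<omega>) \<partial>(\<Pi>\<^sub>M u\<in>(UNIV::nat set). F \<mu>))
          \<le> (c n)\<^sup>2 * (3 + 2 / (h * k) + 2 * (K0 + K2\<^sup>2) / h ^ 4)"
      using F_prob F_sets mu0
      by (intro ET_main[OF _ _ mu0 mu1 h0 c1 hz[OF mu(1)] k0 th mg' _ _ m4 m2]) (auto simp: K2_def less_imp_le K0)
    moreover have "0 \<le> (\<integral>\<omega>. real (Tc_min (\<zeta> n) (c n) n \<omega>) \<partial>(\<Pi>\<^sub>M u\<in>(UNIV::nat set). F \<mu>))"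
      by (rule Bochner_Integration.integral_nonneg) simp
    ultimately show ?thesis using mu0 unfolding ET_def iidM_def Bc_def by simp
  qed
  have cmge: "\<mu> \<le> cond_mean F \<mu>" if mu: "0 < \<mu>" for \<mu>
  proof (rule cond_mean_ge)
    show "prob_space (F \<mu>)" "sets (F \<mu>) = sets borel" "AE x in F \<mu>. 0 \<le> x" "(\<integral>x. x \<partial>F \<mu>) = \<mu>"
      using F_prob F_sets F_nonneg F_mean mu by auto
    obtain a1 where a1: "0 < a1" "\<forall>\<mu>>0. measure (F \<mu>) {0<..} \<ge> a1 * min \<mu> 1" using A2 by blast
    have "0 < a1 * min \<mu> 1" using a1 mu by simp
    thus "0 < measure (F \<mu>) {0<..}" using a1 mu by (meson less_le_trans)
  qed (rule mu)
  have lam0: "0 < lam" unfolding lam_def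
    by (rule lam_pos[OF g_nonneg g_total lam_int cmge])
  have C0: "0 < C" unfolding C_def using lam0 A1(1,2) by simp
  have zpos: "\<forall>\<^sub>F n in sequentially. 0 < \<zeta> n"
  proof -
    have "\<forall>\<^sub>F n in sequentially. 0 < C * real n powr (- 1 / (\<beta> + 1))"
      using eventually_ge_at_top[of "1::nat"] by eventually_elim (use C0 in simp)
    with asymp_equiv_eventually_pos_iff[OF zeta_asym] show ?thesis
      by eventually_elim simp
  qed
  have dlim: "d \<longlonglongrightarrow> 0"
  proof -
    have "(\<lambda>n. real n powr (- \<omega>)) \<longlonglongrightarrow> 0"
      using omega(1) by (intro tendsto_neg_powr filterlim_real_sequentially) simp
    moreover have "d = (\<lambda>n. real n powr (- \<omega>))" using d_def by auto
    ultimately show ?thesis by simp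
  qed
  have dsmall: "\<forall>\<^sub>F n in sequentially. d n < min 1 (min \<xi>m \<xi>g)"
    using order_tendstoD(2)[OF dlim, of "min 1 (min \<xi>m \<xi>g)"] \<xi>m \<xi>g by simp
  have cbig: "\<forall>\<^sub>F n in sequentially. 1 + \<bar>Sup ({}::real set)\<bar> \<le> c n"
    using c_lim by (simp add: filterlim_at_top)
  define p where "p = \<omega> * \<beta> / 4"
  have p0: "0 < p" unfolding p_def using omega A1 by simp
  have csmall: "\<forall>\<^sub>F n in sequentially. norm (c n) \<le> 1 * norm (real n powr p)"
    using landau_o.smallD[OF c_small[rule_format, OF p0], of 1] by simp
  have ev: "\<forall>\<^sub>F n in sequentially. 1 + \<bar>Sup ({}::real set)\<bar> \<le> c n \<and> 0 < \<zeta> n \<and> d n < min 1 (min \<xi>m \<xi>g)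
      \<and> 1 \<le> n \<and> norm (c n) \<le> 1 * norm (real n powr p)"
    using cbig zpos dsmall eventually_ge_at_top[of "1::nat"] csmall by eventually_elim blast
  have evc: "1 \<le> c n" "0 < (1 + \<epsilon>) * \<zeta> n" "d n \<le> 1" "d n < \<xi>m" "d n < \<xi>g" "1 \<le> real n"
    "\<bar>c n\<bar> \<le> real n powr p" "\<bar>Sup ({}::real set)\<bar> \<le> c n - 1"
    if "1 + \<bar>Sup ({}::real set)\<bar> \<le> c n \<and> 0 < \<zeta> n \<and> d n < min 1 (min \<xi>m \<xi>g)
      \<and> 1 \<le> n \<and> norm (c n) \<le> 1 * norm (real n powr p)" for n
    using that eps by (auto intro: mult_pos_pos)
  have part1: "(\<lambda>n. SUP \<mu>\<in>{(1 + \<epsilon>) * \<zeta> n .. d n}. \<mu> * ET F (\<zeta> n) (c n) n \<mu>) \<in> O(\<lambda>n. (c n) ^ 3 + ln (real n))"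
  proof (rule bigoI[where c = "Bc + 1"])
    show "\<forall>\<^sub>F n in sequentially. norm (SUP \<mu>\<in>{(1 + \<epsilon>) * \<zeta> n .. d n}. \<mu> * ET F (\<zeta> n) (c n) n \<mu>)
            \<le> (Bc + 1) * norm ((c n) ^ 3 + ln (real n))"
      using ev
    proof eventually_elim
      case (elim n)
      note e = evc[OF elim]
      have c2: "(c n)\<^sup>2 \<le> (c n) ^ 3" using e(1) by (intro power_increasing) auto
      have c1: "c n \<le> (c n) ^ 3" using e(1) by (simp add: power_increasing[of 1 3 "c n", simplified])
      have ln0: "0 \<le> ln (real n)" using e(6) by simp
      have nrm: "norm ((c n) ^ 3 + ln (real n)) = (c n) ^ 3 + ln (real n)" using e(1) ln0 by simp
      have pos: "0 \<le> (c n) ^ 3 + ln (real n)" using e(1) ln0 by simp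
      have bnd: "X \<le> (c n) ^ 3 + ln (real n) \<Longrightarrow> X \<le> (Bc + 1) * ((c n) ^ 3 + ln (real n))" for X
        using Bc0 pos by (smt (verit) mult_le_cancel_right1 mult_nonneg_nonneg)
      show ?case
      proof (cases "{(1 + \<epsilon>) * \<zeta> n .. d n} = {}")
        case True
        have "\<bar>Sup ({}::real set)\<bar> \<le> (c n) ^ 3 + ln (real n)" using e(8) c1 ln0 by linarith
        thus ?thesis using True nrm bnd by simp
      next
        case False
        have kb: "0 \<le> \<mu> * ET F (\<zeta> n) (c n) n \<mu> \<and> \<mu> * ET F (\<zeta> n) (c n) n \<mu> \<le> (c n)\<^sup>2 * Bc"
          if "\<mu> \<in> {(1 + \<epsilon>) * \<zeta> n .. d n}" for \<mu>
          using key[OF e(1) e(2) e(3) e(4)] that by auto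
        have up: "(SUP \<mu>\<in>{(1 + \<epsilon>) * \<zeta> n .. d n}. \<mu> * ET F (\<zeta> n) (c n) n \<mu>) \<le> (c n)\<^sup>2 * Bc"
          using kb False by (intro cSUP_least) auto
        obtain \<mu>0 where \<mu>0: "\<mu>0 \<in> {(1 + \<epsilon>) * \<zeta> n .. d n}" using False by blast
        have "\<mu>0 * ET F (\<zeta> n) (c n) n \<mu>0 \<le> (SUP \<mu>\<in>{(1 + \<epsilon>) * \<zeta> n .. d n}. \<mu> * ET F (\<zeta> n) (c n) n \<mu>)"
          using kb \<mu>0 by (intro cSUP_upper bdd_aboveI2[where M = "(c n)\<^sup>2 * Bc"]) auto
        hence lo: "0 \<le> (SUP \<mu>\<in>{(1 + \<epsilon>) * \<zeta> n .. d n}. \<mu> * ET F (\<zeta> n) (c n) n \<mu>)"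
          using kb[OF \<mu>0] by linarith
        have "(c n)\<^sup>2 * Bc \<le> (c n) ^ 3 * Bc" using c2 Bc0 by (intro mult_right_mono) auto
        also have "\<dots> \<le> ((c n) ^ 3 + ln (real n)) * Bc" using ln0 Bc0 by (intro mult_right_mono) auto
        also have "\<dots> \<le> (Bc + 1) * ((c n) ^ 3 + ln (real n))" using pos by (simp add: algebra_simps)
        finally show ?thesis using up lo nrm by simp
      qed
    qed
  qed
  have part2: "((\<lambda>n. \<integral>\<^sup>+\<mu>. ennreal (indicator {(1 + \<epsilon>) * \<zeta> n .. d n} \<mu> * g \<mu> * \<mu>
                                  * ET F (\<zeta> n) (c n) n \<mu>) \<partial>lborel) \<longlongrightarrow> 0) sequentially"
  proof (rule tendsto_sandwich[where f = "\<lambda>_. 0" and h = "\<lambda>n. ennreal (Bc * 2 * \<alpha> / \<beta> * real n powr (- (2 * p)))"])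
    show "\<forall>\<^sub>F n in sequentially. (0::ennreal) \<le> (\<integral>\<^sup>+\<mu>. ennreal (indicator {(1 + \<epsilon>) * \<zeta> n .. d n} \<mu> * g \<mu> * \<mu>
                                  * ET F (\<zeta> n) (c n) n \<mu>) \<partial>lborel)" by simp
    show "((\<lambda>_. 0::ennreal) \<longlongrightarrow> 0) sequentially" by simp
    have "(\<lambda>n. Bc * 2 * \<alpha> / \<beta> * real n powr (- (2 * p))) \<longlonglongrightarrow> Bc * 2 * \<alpha> / \<beta> * 0"
      using p0 by (intro tendsto_mult tendsto_const tendsto_neg_powr filterlim_real_sequentially) simp
    hence "(\<lambda>n. ennreal (Bc * 2 * \<alpha> / \<beta> * real n powr (- (2 * p)))) \<longlonglongrightarrow> ennreal (Bc * 2 * \<alpha> / \<beta> * 0)"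
      by (rule tendsto_ennrealI)
    thus "(\<lambda>n. ennreal (Bc * 2 * \<alpha> / \<beta> * real n powr (- (2 * p)))) \<longlonglongrightarrow> 0" by simp
    show "\<forall>\<^sub>F n in sequentially. (\<integral>\<^sup>+\<mu>. ennreal (indicator {(1 + \<epsilon>) * \<zeta> n .. d n} \<mu> * g \<mu> * \<mu>
                                  * ET F (\<zeta> n) (c n) n \<mu>) \<partial>lborel) \<le> ennreal (Bc * 2 * \<alpha> / \<beta> * real n powr (- (2 * p)))"
      using ev
    proof eventually_elim
      case (elim n)
      note e = evc[OF elim]
      define a where "a = (1 + \<epsilon>) * \<zeta> n"
      have a0: "0 < a" using e(2) a_def by simp
      define L where "L = Bc * (c n)\<^sup>2 * (2 * \<alpha>)"
      have L0: "0 \<le> L" unfolding L_def using Bc0 A1(1) by simp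
      have "(\<integral>\<^sup>+\<mu>. ennreal (indicator {(1 + \<epsilon>) * \<zeta> n .. d n} \<mu> * g \<mu> * \<mu> * ET F (\<zeta> n) (c n) n \<mu>) \<partial>lborel)
          \<le> (\<integral>\<^sup>+\<mu>. ennreal L * (ennreal (\<mu> powr (\<beta> - 1)) * indicator {a .. d n} \<mu>) \<partial>lborel)"
      proof (rule nn_integral_mono)
        fix \<mu> :: real
        show "ennreal (indicator {(1 + \<epsilon>) * \<zeta> n .. d n} \<mu> * g \<mu> * \<mu> * ET F (\<zeta> n) (c n) n \<mu>)
            \<le> ennreal L * (ennreal (\<mu> powr (\<beta> - 1)) * indicator {a .. d n} \<mu>)"
        proof (cases "\<mu> \<in> {a .. d n}")
          case True
          have mu0: "0 < \<mu>" using True a0 by simp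
          have kb: "0 \<le> \<mu> * ET F (\<zeta> n) (c n) n \<mu> \<and> \<mu> * ET F (\<zeta> n) (c n) n \<mu> \<le> (c n)\<^sup>2 * Bc"
            using key[OF e(1) e(2) e(3) e(4)] True a_def by auto
          have g0: "0 \<le> g \<mu>" using g_nonneg mu0 by simp
          have gle: "g \<mu> \<le> 2 * \<alpha> * \<mu> powr (\<beta> - 1)" using \<xi>gP[OF mu0] True e(5) by simp
          have "g \<mu> * (\<mu> * ET F (\<zeta> n) (c n) n \<mu>) \<le> g \<mu> * ((c n)\<^sup>2 * Bc)"
            using kb g0 by (intro mult_left_mono) auto
          also have "\<dots> \<le> (2 * \<alpha> * \<mu> powr (\<beta> - 1)) * ((c n)\<^sup>2 * Bc)"
            using gle Bc0 by (intro mult_right_mono) auto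
          also have "\<dots> = L * \<mu> powr (\<beta> - 1)" unfolding L_def by (simp add: algebra_simps)
          finally have "indicator {(1 + \<epsilon>) * \<zeta> n .. d n} \<mu> * g \<mu> * \<mu> * ET F (\<zeta> n) (c n) n \<mu> \<le> L * \<mu> powr (\<beta> - 1)"
            using True a_def by (simp add: mult.assoc)
          hence "ennreal (indicator {(1 + \<epsilon>) * \<zeta> n .. d n} \<mu> * g \<mu> * \<mu> * ET F (\<zeta> n) (c n) n \<mu>) \<le> ennreal (L * \<mu> powr (\<beta> - 1))"
            by (rule ennreal_leI)
          also have "\<dots> = ennreal L * (ennreal (\<mu> powr (\<beta> - 1)) * indicator {a .. d n} \<mu>)"
            using True L0 by (simp add: ennreal_mult)
          finally show ?thesis .
        next
          case False
          thus ?thesis using a_def by simp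
        qed
      qed
      also have "\<dots> = ennreal L * (\<integral>\<^sup>+\<mu>. ennreal (\<mu> powr (\<beta> - 1)) * indicator {a .. d n} \<mu> \<partial>lborel)"
        by (rule nn_integral_cmult) measurable
      also have "\<dots> \<le> ennreal L * ennreal (d n powr \<beta> / \<beta>)"
        by (intro mult_left_mono powr_integral_bound[OF A1(2) a0]) simp
      also have "\<dots> = ennreal (L * (d n powr \<beta> / \<beta>))" using L0 A1(2) by (intro ennreal_mult'[symmetric]) auto
      also have "\<dots> \<le> ennreal (Bc * 2 * \<alpha> / \<beta> * real n powr (- (2 * p)))"
      proof (rule ennreal_leI)
        have n0: "0 < real n" using e(6) by simp
        have dp: "d n powr \<beta> = real n powr (- (4 * p))"
          using d_def n0 by (simp add: powr_powr p_def)
        have "(c n)\<^sup>2 = \<bar>c n\<bar>\<^sup>2" by simp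
        also have "\<dots> \<le> (real n powr p)\<^sup>2" using e(7) by (intro power_mono) auto
        also have "\<dots> = real n powr (2 * p)" using n0 by (simp add: power2_eq_square powr_add[symmetric])
        finally have c2: "(c n)\<^sup>2 \<le> real n powr (2 * p)" .
        have "(c n)\<^sup>2 * d n powr \<beta> \<le> real n powr (2 * p) * real n powr (- (4 * p))"
          unfolding dp using c2 by (intro mult_right_mono) auto
        also have "\<dots> = real n powr (- (2 * p))" using n0 by (simp add: powr_add[symmetric])
        finally have cd: "(c n)\<^sup>2 * d n powr \<beta> \<le> real n powr (- (2 * p))" .
        have "L * (d n powr \<beta> / \<beta>) = (Bc * 2 * \<alpha> / \<beta>) * ((c n)\<^sup>2 * d n powr \<beta>)"
          unfolding L_def by (simp add: algebra_simps)
        also have "\<dots> \<le> (Bc * 2 * \<alpha> / \<beta>) * real n powr (- (2 * p))"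
          using cd Bc0 A1(1,2) by (intro mult_left_mono) auto
        finally show "L * (d n powr \<beta> / \<beta>) \<le> Bc * 2 * \<alpha> / \<beta> * real n powr (- (2 * p))" .
      qed
      finally show ?case .
    qed
  qed
  show ?thesis using part1 part2 by blast
qed

end
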